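(* Let $\Sigma_1,\Sigma_2$ be subspaces of the Euclidean space $E_n$ with $1\le \dim\Sigma_1,\dim\Sigma_2\le n-1$, and let $\Sigma_1^*,\Sigma_2^*$ be their orthogonal complements. Then $\varphi(\Sigma_1,\Sigma_2)=\varphi(\Sigma_1^*,\Sigma_2^* )$.
   Context: $E_n$ is $\mathbb R^n$ with its standard inner product $(\cdot,\cdot)$. Angle between subspaces: for nonzero subspaces $S,T$ of $E_n$ with $\dim S=p\le q=\dim T$, choose orthonormal bases $\mathbf a_1,\dots,\mathbf a_p$ of $S$ and $\mathbf b_1,\dots,\mathbf b_q$ of $T$ and let $M$ be the $p\times q$ matrix $M_{ij}=(\mathbf a_i,\mathbf b_j)$. Then $0\le\det(MM^T)\le 1$, and the angle $\varphi(S,T)=\varphi(T,S)\in[0,\pi/2]$ is defined by $\cos^2\varphi(S,T)=\det(MM^T)$ (this does not depend on the choice of orthonormal bases). *)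

theory Defs
  imports "HOL-Analysis.Analysis"
begin

definition is_onb :: "'a::euclidean_space set \<Rightarrow> 'a list \<Rightarrow> bool" where
  "is_onb S as \<longleftrightarrow> length as = dim S \<and>
     (\<forall>i<length as. \<forall>j<length as. as ! i \<bullet> as ! j = (if i = j then 1 else 0)) \<and>
     span (set as) = S"

definition det_nat :: "nat \<Rightarrow> (nat \<Rightarrow> nat \<Rightarrow> real) \<Rightarrow> real" where
  "det_nat p A = (\<Sum>\<sigma> | \<sigma> permutes {..<p}. of_int (sign \<sigma>) * (\<Prod>i<p. A i (\<sigma> i)))"

text \<open>det(M M^T) where M_ij = (a_i, b_j), p = length as, q = length bs.\<close>
definition gram_cos2 :: "'a::euclidean_space list \<Rightarrow> 'a list \<Rightarrow> real" where
  "gram_cos2 as bs = det_nat (length as)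
     (\<lambda>i j. \<Sum>k<length bs. (as ! i \<bullet> bs ! k) * (as ! j \<bullet> bs ! k))"

definition cos2_angle :: "'a::euclidean_space set \<Rightarrow> 'a set \<Rightarrow> real" where
  "cos2_angle S T =
     (if dim S \<le> dim T then gram_cos2 (SOME as. is_onb S as) (SOME bs. is_onb T bs)
      else gram_cos2 (SOME bs. is_onb T bs) (SOME as. is_onb S as))"

definition subspace_angle :: "'a::euclidean_space set \<Rightarrow> 'a set \<Rightarrow> real" where
  "subspace_angle S T = arccos (sqrt (cos2_angle S T))"

end

theory Submission
  imports Defs "Jordan_Normal_Form.Determinant"
begin

lemma sylv:
  fixes B :: "real mat" assumes B: "B \<in> carrier_mat p m"
  shows "Determinant.det (1\<^sub>m p - B * B\<^sup>T) = Determinant.det (1\<^sub>m m - B\<^sup>T * B)"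
proof -
  have BT: "B\<^sup>T \<in> carrier_mat m p" using B by auto
  define M where "M = four_block_mat (1\<^sub>m p) B (B\<^sup>T) (1\<^sub>m m)"
  define N1 where "N1 = four_block_mat (1\<^sub>m p) (-B) (0\<^sub>m m p) (1\<^sub>m m)"
  define N2 where "N2 = four_block_mat (1\<^sub>m p) (0\<^sub>m p m) (-B\<^sup>T) (1\<^sub>m m)"
  have Mc: "M \<in> carrier_mat (p+m) (p+m)" unfolding M_def using B BT by auto
  have N1c: "N1 \<in> carrier_mat (p+m) (p+m)" unfolding N1_def using B BT by auto
  have N2c: "N2 \<in> carrier_mat (p+m) (p+m)" unfolding N2_def using B BT by auto
  have dN1: "Determinant.det N1 = 1" unfolding N1_def
    by (subst det_four_block_mat_lower_left_zero[of _ p _ m], insert B, auto)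
  have dN2: "Determinant.det N2 = 1" unfolding N2_def
    by (subst det_four_block_mat_upper_right_zero[of _ p _ m], insert BT, auto)
  have "M * N1 = four_block_mat (1\<^sub>m p) (0\<^sub>m p m) (B\<^sup>T) (1\<^sub>m m - B\<^sup>T * B)"
    unfolding M_def N1_def
    by (subst mult_four_block_mat[OF one_carrier_mat B BT one_carrier_mat one_carrier_mat uminus_carrier_mat[OF B] zero_carrier_mat one_carrier_mat], insert B BT, auto)
  then have e1: "Determinant.det (M * N1) = Determinant.det (1\<^sub>m m - B\<^sup>T * B)"
    by (simp, subst det_four_block_mat_upper_right_zero[of _ p _ m], insert B BT, auto)
  have "M * N2 = four_block_mat (1\<^sub>m p - B * B\<^sup>T) B (0\<^sub>m m p) (1\<^sub>m m)"
    unfolding M_def N2_def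
    by (subst mult_four_block_mat[OF one_carrier_mat B BT one_carrier_mat one_carrier_mat zero_carrier_mat uminus_carrier_mat[OF BT] one_carrier_mat], insert B BT, auto)
  then have e2: "Determinant.det (M * N2) = Determinant.det (1\<^sub>m p - B * B\<^sup>T)"
    by (simp, subst det_four_block_mat_lower_left_zero[of _ p _ m], insert B BT, auto)
  show ?thesis using e1 e2 det_mult[OF Mc N1c] det_mult[OF Mc N2c] dN1 dN2 by simp
qed

no_notation Matrix.scalar_prod (infix "\<bullet>" 70)

lemma onb_exists:
  fixes S :: "'a::euclidean_space set" assumes "subspace S" shows "\<exists>as. is_onb S as"
proof -
  obtain B where "B \<subseteq> S" and ortho: "pairwise Linear_Algebra.orthogonal B" "\<And>x. x\<in>B \<Longrightarrow> norm x = 1"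
    and ind: "independent B" and cB: "card B = dim S" and sB: "span B = S"
    using orthonormal_basis_subspace[OF assms] by metis
  then have fin: "finite B" by (simp add: indep_card_eq_dim_span)
  obtain xs where xs: "set xs = B" "distinct xs" using finite_distinct_list[OF fin] by blast
  have "length xs = dim S" using xs cB distinct_card by fastforce
  moreover have "\<forall>i<length xs. \<forall>j<length xs. xs ! i \<bullet> xs ! j = (if i = j then 1 else 0)"
  proof (intro allI impI)
    fix i j assume i: "i < length xs" and j: "j < length xs"
    have xi: "xs!i \<in> B" "xs!j \<in> B" using i j xs(1) nth_mem by blast+
    show "xs ! i \<bullet> xs ! j = (if i = j then 1 else 0)"
    proof (cases "i = j")
      case True then show ?thesis using ortho(2)[OF xi(1)] by (simp add: norm_eq_1)
    next
      case False
      then have "xs!i \<noteq> xs!j" using xs(2) i j nth_eq_iff_index_eq by blast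
      then show ?thesis using False ortho(1) xi unfolding pairwise_def Linear_Algebra.orthogonal_def by auto
    qed
  qed
  ultimately show ?thesis unfolding is_onb_def using xs sB by blast
qed

lemma orth_to_span_list:
  fixes ds :: "'a::euclidean_space list"
  assumes "\<And>j. j < length ds \<Longrightarrow> ds!j \<bullet> r = 0" "z \<in> span (set ds)"
  shows "z \<bullet> r = 0"
proof -
  have "Linear_Algebra.orthogonal r z"
    by (rule orthogonal_to_span[OF assms(2)])
       (metis assms(1) in_set_conv_nth inner_commute Linear_Algebra.orthogonal_def)
  then show ?thesis by (simp add: Linear_Algebra.orthogonal_def inner_commute)
qed

lemma onb_expand:
  assumes on: "\<forall>i<length ds. \<forall>j<length ds. ds!i \<bullet> ds!j = (if i=j then 1 else (0::real))"
    and w: "(w::'a::euclidean_space) \<in> span (set ds)"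
  shows "w = (\<Sum>k<length ds. (w \<bullet> ds!k) *\<^sub>R ds!k)"
proof -
  define r where "r = w - (\<Sum>k<length ds. (w \<bullet> ds!k) *\<^sub>R ds!k)"
  have rs: "r \<in> span (set ds)" unfolding r_def
    by (intro span_diff w span_sum span_mul span_base) simp
  have o: "ds!j \<bullet> r = 0" if "j < length ds" for j
  proof -
    have "ds!j \<bullet> (\<Sum>k<length ds. (w \<bullet> ds!k) *\<^sub>R ds!k) = (\<Sum>k<length ds. (w \<bullet> ds!k) * (if j = k then 1 else 0))"
      using on that by (simp add: inner_sum_right)
    also have "\<dots> = w \<bullet> ds!j" using that by (simp add: if_distrib cong: if_cong)
    finally show ?thesis unfolding r_def by (simp add: inner_diff_right inner_commute)
  qed
  have "r \<bullet> r = 0" by (rule orth_to_span_list[OF o rs])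
  then show ?thesis unfolding r_def by simp
qed

lemma parseval:
  assumes a: "is_onb S as" and d: "is_onb (orthogonal_comp S) ds"
  shows "(x::'a::euclidean_space) \<bullet> y = (\<Sum>i<length as. (x \<bullet> as!i) * (y \<bullet> as!i)) + (\<Sum>k<length ds. (x \<bullet> ds!k) * (y \<bullet> ds!k))"
proof -
  have aon: "\<forall>i<length as. \<forall>j<length as. as!i \<bullet> as!j = (if i=j then 1 else (0::real))"
    and asp: "span (set as) = S" using a unfolding is_onb_def by auto
  have don: "\<forall>i<length ds. \<forall>j<length ds. ds!i \<bullet> ds!j = (if i=j then 1 else (0::real))"
    and dsp: "span (set ds) = orthogonal_comp S" using d unfolding is_onb_def by auto
  have ad: "as!i \<bullet> ds!k = 0" if "i < length as" "k < length ds" for i k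
  proof -
    have "as!i \<in> S" using asp that(1) by (metis nth_mem span_base)
    moreover have "ds!k \<in> orthogonal_comp S" using dsp that(2) by (metis nth_mem span_base)
    ultimately show ?thesis by (simp add: orthogonal_comp_def Linear_Algebra.orthogonal_def)
  qed
  define u where "u = y - (\<Sum>i<length as. (y \<bullet> as!i) *\<^sub>R as!i)"
  have ua: "as!j \<bullet> u = 0" if "j < length as" for j
  proof -
    have "as!j \<bullet> (\<Sum>i<length as. (y \<bullet> as!i) *\<^sub>R as!i) = (\<Sum>i<length as. (y \<bullet> as!i) * (if j = i then 1 else 0))"
      using aon that by (simp add: inner_sum_right)
    also have "\<dots> = y \<bullet> as!j" using that by (simp add: if_distrib cong: if_cong)
    finally show ?thesis unfolding u_def by (simp add: inner_diff_right inner_commute)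
  qed
  have "u \<in> orthogonal_comp S"
    unfolding orthogonal_comp_def Linear_Algebra.orthogonal_def
    using orth_to_span_list[OF ua] asp by blast
  then have u: "u = (\<Sum>k<length ds. (u \<bullet> ds!k) *\<^sub>R ds!k)" using onb_expand[OF don] dsp by blast
  have ud: "u \<bullet> ds!k = y \<bullet> ds!k" if "k < length ds" for k
    unfolding u_def using ad[OF _ that] by (simp add: inner_diff_left inner_sum_left)
  have "y = (\<Sum>i<length as. (y \<bullet> as!i) *\<^sub>R as!i) + (\<Sum>k<length ds. (y \<bullet> ds!k) *\<^sub>R ds!k)"
    using u ud u_def by (metis (no_types, lifting) add.commute diff_add_cancel lessThan_iff sum.cong)
  then have "x \<bullet> y = x \<bullet> ((\<Sum>i<length as. (y \<bullet> as!i) *\<^sub>R as!i) + (\<Sum>k<length ds. (y \<bullet> ds!k) *\<^sub>R ds!k))" by simp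
  then show ?thesis by (simp add: inner_add_right inner_sum_right mult.commute)
qed


definition Mx :: "'a::euclidean_space list \<Rightarrow> 'a list \<Rightarrow> real mat" where
  "Mx xs ys = Matrix.mat (length xs) (length ys) (\<lambda>(i,j). xs!i \<bullet> ys!j)"

lemma det_nat_eq: "det_nat p A = Determinant.det (Matrix.mat p p (\<lambda>(i,j). A i j))"
  unfolding det_nat_def Determinant.det_def
  by (auto simp: atLeast0LessThan permutes_in_image intro!: sum.cong prod.cong)

lemma gram_mat: "gram_cos2 xs ys = Determinant.det (Mx xs ys * (Mx xs ys)\<^sup>T)"
  unfolding gram_cos2_def det_nat_eq
  by (rule arg_cong[where f=Determinant.det], rule eq_matI)
     (auto simp: Mx_def scalar_prod_def atLeast0LessThan)

lemma keyL:
  assumes a: "is_onb S as" and d: "is_onb (orthogonal_comp S) ds"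
    and b: "is_onb T bs" and c: "is_onb (orthogonal_comp T) cs"
  shows "gram_cos2 as bs = gram_cos2 cs ds"
proof -
  have aon: "\<forall>i<length as. \<forall>j<length as. as!i \<bullet> as!j = (if i=j then 1 else (0::real))"
    using a unfolding is_onb_def by auto
  have con: "\<forall>i<length cs. \<forall>j<length cs. cs!i \<bullet> cs!j = (if i=j then 1 else (0::real))"
    using c unfolding is_onb_def by auto
  define B where "B = Mx as cs"
  have Bc: "B \<in> carrier_mat (length as) (length cs)" by (simp add: B_def Mx_def)
  have 1: "Mx as bs * (Mx as bs)\<^sup>T = 1\<^sub>m (length as) - B * B\<^sup>T"
  proof (rule eq_matI)
    fix i j assume i: "i < dim_row (1\<^sub>m (length as) - B * B\<^sup>T)" and j: "j < dim_col (1\<^sub>m (length as) - B * B\<^sup>T)"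
    then have i': "i < length as" and j': "j < length as" by (auto simp: B_def Mx_def)
    have "(\<Sum>k<length bs. (as!i \<bullet> bs!k) * (as!j \<bullet> bs!k)) = as!i \<bullet> as!j - (\<Sum>k<length cs. (as!i \<bullet> cs!k) * (as!j \<bullet> cs!k))"
      using parseval[OF b c, of "as!i" "as!j"] by simp
    then show "(Mx as bs * (Mx as bs)\<^sup>T) $$ (i, j) = (1\<^sub>m (length as) - B * B\<^sup>T) $$ (i, j)"
      using i' j' aon by (simp add: B_def Mx_def scalar_prod_def atLeast0LessThan)
  qed (auto simp: B_def Mx_def)
  have 2: "Mx cs ds * (Mx cs ds)\<^sup>T = 1\<^sub>m (length cs) - B\<^sup>T * B"
  proof (rule eq_matI)
    fix i j assume i: "i < dim_row (1\<^sub>m (length cs) - B\<^sup>T * B)" and j: "j < dim_col (1\<^sub>m (length cs) - B\<^sup>T * B)"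
    then have i': "i < length cs" and j': "j < length cs" by (auto simp: B_def Mx_def)
    have "(\<Sum>k<length ds. (cs!i \<bullet> ds!k) * (cs!j \<bullet> ds!k)) = cs!i \<bullet> cs!j - (\<Sum>k<length as. (cs!i \<bullet> as!k) * (cs!j \<bullet> as!k))"
      using parseval[OF a d, of "cs!i" "cs!j"] by simp
    then show "(Mx cs ds * (Mx cs ds)\<^sup>T) $$ (i, j) = (1\<^sub>m (length cs) - B\<^sup>T * B) $$ (i, j)"
      using i' j' con by (simp add: B_def Mx_def scalar_prod_def atLeast0LessThan inner_commute)
  qed (auto simp: B_def Mx_def)
  show ?thesis unfolding gram_mat 1 2 using sylv[OF Bc] .
qed

lemma gram_sym:
  assumes "length xs = length ys"
  shows "gram_cos2 xs ys = gram_cos2 ys xs"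
proof -
  define M where "M = Mx xs ys"
  have Mc: "M \<in> carrier_mat (length xs) (length xs)" using assms by (simp add: M_def Mx_def)
  have MTc: "M\<^sup>T \<in> carrier_mat (length xs) (length xs)" using Mc by simp
  have MT: "Mx ys xs = M\<^sup>T" unfolding M_def Mx_def by (rule eq_matI) (auto simp: inner_commute)
  have "gram_cos2 xs ys = Determinant.det M * Determinant.det M\<^sup>T"
    unfolding gram_mat M_def[symmetric] using det_mult[OF Mc MTc] by simp
  moreover have "gram_cos2 ys xs = Determinant.det M\<^sup>T * Determinant.det M"
    unfolding gram_mat MT using det_mult[OF MTc Mc] by simp
  ultimately show ?thesis by simp
qed


lemma dim_comp:
  fixes S :: "'a::euclidean_space set"
  assumes "subspace S"
  shows "dim (orthogonal_comp S) + dim S = DIM('a)"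
proof -
  have "{x + y |x y. x \<in> S \<and> y \<in> orthogonal_comp S} = UNIV"
    using subspace_sum_orthogonal_comp[OF assms] unfolding set_plus_def by blast
  moreover have "S \<inter> orthogonal_comp S = {0}" using orthogonal_Int_0[OF assms] .
  ultimately show ?thesis
    using dim_sums_Int[OF assms subspace_orthogonal_comp[of S]] by (simp add: dim_UNIV)
qed

lemma onb_some:
  fixes S :: "'a::euclidean_space set"
  assumes "subspace S"
  shows "is_onb S (SOME as. is_onb S as)" "length (SOME as. is_onb S as) = dim S"
  using someI_ex[OF onb_exists[OF assms]] unfolding is_onb_def by auto

theorem theorem1p3:
  fixes \<Sigma>1 \<Sigma>2 :: "'a::euclidean_space set"
  assumes "subspace \<Sigma>1" and "subspace \<Sigma>2"
    and "1 \<le> dim \<Sigma>1" and "dim \<Sigma>1 \<le> DIM('a) - 1"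
    and "1 \<le> dim \<Sigma>2" and "dim \<Sigma>2 \<le> DIM('a) - 1"
  shows "subspace_angle \<Sigma>1 \<Sigma>2 = subspace_angle (orthogonal_comp \<Sigma>1) (orthogonal_comp \<Sigma>2)"
proof -
  let ?S = \<Sigma>1 and ?T = \<Sigma>2
  define as where "as = (SOME as. is_onb ?S as)"
  define bs where "bs = (SOME as. is_onb ?T as)"
  define ds where "ds = (SOME as. is_onb (orthogonal_comp ?S) as)"
  define cs where "cs = (SOME as. is_onb (orthogonal_comp ?T) as)"
  note sS = assms(1) and sT = assms(2)
  note sSc = subspace_orthogonal_comp[of ?S] and sTc = subspace_orthogonal_comp[of ?T]
  have a: "is_onb ?S as" "length as = dim ?S" using onb_some[OF sS] as_def by auto
  have b: "is_onb ?T bs" "length bs = dim ?T" using onb_some[OF sT] bs_def by auto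
  have d: "is_onb (orthogonal_comp ?S) ds" "length ds = dim (orthogonal_comp ?S)"
    using onb_some[OF sSc] ds_def by auto
  have c: "is_onb (orthogonal_comp ?T) cs" "length cs = dim (orthogonal_comp ?T)"
    using onb_some[OF sTc] cs_def by auto
  have dS: "dim (orthogonal_comp ?S) + dim ?S = DIM('a)" by (rule dim_comp[OF sS])
  have dT: "dim (orthogonal_comp ?T) + dim ?T = DIM('a)" by (rule dim_comp[OF sT])
  have "cos2_angle ?S ?T = cos2_angle (orthogonal_comp ?S) (orthogonal_comp ?T)"
  proof (cases "dim ?S \<le> dim ?T")
    case True
    then have l: "cos2_angle ?S ?T = gram_cos2 as bs"
      unfolding cos2_angle_def as_def bs_def by simp
    have k: "gram_cos2 as bs = gram_cos2 cs ds" by (rule keyL[OF a(1) d(1) b(1) c(1)])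
    show ?thesis
    proof (cases "dim (orthogonal_comp ?S) \<le> dim (orthogonal_comp ?T)")
      case True
      then have "length cs = length ds" using \<open>dim ?S \<le> dim ?T\<close> dS dT c(2) d(2) by linarith
      then show ?thesis using True l k gram_sym[of cs ds]
        unfolding cos2_angle_def ds_def cs_def by simp
    next
      case False
      then show ?thesis using l k unfolding cos2_angle_def ds_def cs_def by simp
    qed
  next
    case False
    then have l: "cos2_angle ?S ?T = gram_cos2 bs as"
      unfolding cos2_angle_def as_def bs_def by simp
    have k: "gram_cos2 bs as = gram_cos2 ds cs" by (rule keyL[OF b(1) c(1) a(1) d(1)])
    have "dim (orthogonal_comp ?S) \<le> dim (orthogonal_comp ?T)" using False dS dT by linarith
    then show ?thesis using l k unfolding cos2_angle_def ds_def cs_def by simp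
  qed
  then show ?thesis unfolding subspace_angle_def by simp
qed

end
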